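(* Let $R$ be a division ring and let $\{p_n(x)\}_{n\ge0}\subseteq R[x]$ and $\{q_n(y)\}_{n\ge0}\subseteq R[y]$ be polynomials with $\deg p_n=\deg q_n=n$ for all $n$. For any sequence $\{c_k\}_{k\in\mathbb{Z}_{\ge0}}$ in $R$ there exists a unique family of bimoments $\{I_{a,b}\}_{a,b\in\mathbb{Z}_{\ge0}}\subseteq R$ such that, for the associated pairing, $\langle p_n,q_m\rangle=0$ for all $n\neq m$ and $\langle p_k,q_k\rangle=c_k$ for all $k$.
   Context: Elements of $R[x]$ are written $\sum_i a_i x^i$ and elements of $R[y]$ as $\sum_j y^j b_j$ with coefficients in $R$. A family $\{I_{a,b}\}$ of elements of $R$ (bimoments) determines the pairing $\langle\cdot,\cdot\rangle:R[x]\times R[y]\to R$, $\langle \sum_i a_i x^i,\sum_j y^j b_j\rangle=\sum_{i,j}a_iI_{i,j}b_j$. *)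

theory Defs
  imports "HOL-Computational_Algebra.Polynomial"
begin

text \<open>Bilinear pairing determined by bimoments I:
  for p = sum_i a_i x^i and q = sum_j y^j b_j,
  pairing I p q = sum_{i,j} a_i * I i j * b_j (coefficients of p on the left,
  coefficients of q on the right; R may be noncommutative).\<close>
definition bimoment_pairing ::
  "(nat \<Rightarrow> nat \<Rightarrow> 'a::ring) \<Rightarrow> 'a poly \<Rightarrow> 'a poly \<Rightarrow> 'a" where
  "bimoment_pairing I p q =
     (\<Sum>i\<le>degree p. \<Sum>j\<le>degree q. coeff p i * I i j * coeff q j)"

end

theory Submission
  imports Defs
begin

lemma split_sum:
  fixes f :: "nat \<Rightarrow> nat \<Rightarrow> 'a::ring"
  shows "(\<Sum>i\<le>n. \<Sum>j\<le>m. f i j) =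
         f n m + (\<Sum>i\<le>n. \<Sum>j\<le>m. (if i = n \<and> j = m then 0 else f i j))"
proof -
  have "(\<Sum>i\<le>n. \<Sum>j\<le>m. f i j) =
        (\<Sum>i\<le>n. \<Sum>j\<le>m. (if i = n \<and> j = m then f i j else 0) + (if i = n \<and> j = m then 0 else f i j))"
    by (intro sum.cong refl) auto
  also have "\<dots> = (\<Sum>i\<le>n. \<Sum>j\<le>m. (if i = n \<and> j = m then f i j else 0)) +
        (\<Sum>i\<le>n. \<Sum>j\<le>m. (if i = n \<and> j = m then 0 else f i j))"
    by (simp add: sum.distrib)
  also have "(\<Sum>i\<le>n. \<Sum>j\<le>m. (if i = n \<and> j = m then f i j else 0)) = f n m"
  proof -
    have "(\<Sum>i\<le>n. \<Sum>j\<le>m. (if i = n \<and> j = m then f i j else 0)) =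
          (\<Sum>i\<le>n. if i = n then f n m else 0)"
      by (intro sum.cong refl) (auto simp: sum.delta)
    also have "\<dots> = f n m" by (simp add: sum.delta)
    finally show ?thesis .
  qed
  finally show ?thesis .
qed

definition rest :: "(nat \<Rightarrow> 'a::ring poly) \<Rightarrow> (nat \<Rightarrow> 'a poly) \<Rightarrow> (nat \<Rightarrow> nat \<Rightarrow> 'a) \<Rightarrow> nat \<Rightarrow> nat \<Rightarrow> 'a" where
  "rest p q G n m = (\<Sum>i\<le>n. \<Sum>j\<le>m. (if i = n \<and> j = m then 0 else coeff (p n) i * G i j * coeff (q m) j))"

lemma pairing_split:
  assumes "degree (p n) = n" "degree (q m) = m"
  shows "bimoment_pairing I (p n) (q m) = coeff (p n) n * I n m * coeff (q m) m + rest p q I n m"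
  unfolding bimoment_pairing_def rest_def assms
  by (rule split_sum)

lemma rest_cong:
  assumes "\<And>i j. i + j < n + m \<Longrightarrow> G i j = H i j"
  shows "rest p q G n m = rest p q H n m"
  unfolding rest_def
  by (intro sum.cong refl) (auto simp: assms)

lemma cancel:
  fixes a x y b :: "'a::division_ring"
  assumes "a \<noteq> 0" "b \<noteq> 0" "a * x * b = a * y * b"
  shows "x = y"
proof -
  have "a * (x - y) * b = 0" using assms(3) by (simp add: algebra_simps)
  with assms(1,2) show ?thesis by simp
qed

primrec F :: "(nat \<Rightarrow> 'a::division_ring poly) \<Rightarrow> (nat \<Rightarrow> 'a poly) \<Rightarrow> (nat \<Rightarrow> nat \<Rightarrow> 'a) \<Rightarrow> nat \<Rightarrow> nat \<Rightarrow> nat \<Rightarrow> 'a" where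
  "F p q T 0 = (\<lambda>i j. 0)"
| "F p q T (Suc N) = (\<lambda>n m. if n + m = N then
      inverse (coeff (p n) n) * (T n m - rest p q (F p q T N) n m) * inverse (coeff (q m) m)
    else F p q T N n m)"

lemma F_stable: "i + j < N \<Longrightarrow> F p q T N i j = F p q T (Suc (i + j)) i j"
proof (induction N)
  case 0 then show ?case by simp
next
  case (Suc N)
  show ?case
  proof (cases "i + j = N")
    case True then show ?thesis by simp
  next
    case False
    then have "i + j < N" using Suc.prems by simp
    then show ?thesis using Suc.IH False by simp
  qed
qed

theorem mainTheorem4:
  fixes p q :: "nat \<Rightarrow> 'a::division_ring poly"
    and c :: "nat \<Rightarrow> 'a"
  assumes "\<And>n. p n \<noteq> 0 \<and> degree (p n) = n"
      and "\<And>n. q n \<noteq> 0 \<and> degree (q n) = n"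
  shows "\<exists>!I :: nat \<Rightarrow> nat \<Rightarrow> 'a.
           (\<forall>n m. n \<noteq> m \<longrightarrow> bimoment_pairing I (p n) (q m) = 0) \<and>
           (\<forall>k. bimoment_pairing I (p k) (q k) = c k)"
proof -
  define T where "T = (\<lambda>n m. if n = m then c n else (0::'a))"
  have degp: "degree (p n) = n" for n using assms(1) by blast
  have degq: "degree (q n) = n" for n using assms(2) by blast
  have ap: "coeff (p n) n \<noteq> 0" for n
    using assms(1)[of n] by (metis leading_coeff_0_iff)
  have aq: "coeff (q n) n \<noteq> 0" for n
    using assms(2)[of n] by (metis leading_coeff_0_iff)
  have equiv: "((\<forall>n m. n \<noteq> m \<longrightarrow> bimoment_pairing I (p n) (q m) = 0) \<and>
           (\<forall>k. bimoment_pairing I (p k) (q k) = c k)) \<longleftrightarrow>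
         (\<forall>n m. bimoment_pairing I (p n) (q m) = T n m)" for I
    unfolding T_def by auto
  define I0 where "I0 = (\<lambda>i j. F p q T (Suc (i + j)) i j)"
  have ex: "bimoment_pairing I0 (p n) (q m) = T n m" for n m
  proof -
    have r: "rest p q I0 n m = rest p q (F p q T (n + m)) n m"
      by (rule rest_cong) (simp add: I0_def F_stable)
    have "I0 n m = inverse (coeff (p n) n) * (T n m - rest p q I0 n m) * inverse (coeff (q m) m)"
    proof -
      have "I0 n m = inverse (coeff (p n) n) * (T n m - rest p q (F p q T (n + m)) n m) * inverse (coeff (q m) m)"
        unfolding I0_def by simp
      then show ?thesis using r by simp
    qed
    then have "coeff (p n) n * I0 n m * coeff (q m) m = T n m - rest p q I0 n m"
      using ap[of n] aq[of m] by (simp add: mult.assoc flip: mult.assoc[of "coeff (p n) n"])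
    then show ?thesis by (simp add: pairing_split degp degq)
  qed
  have uniq: "I = J" if hI: "\<forall>n m. bimoment_pairing I (p n) (q m) = T n m"
      and hJ: "\<forall>n m. bimoment_pairing J (p n) (q m) = T n m" for I J
  proof -
    have "\<forall>n m. n + m = N \<longrightarrow> I n m = J n m" for N
    proof (induction N rule: less_induct)
      case (less N)
      show ?case
      proof (intro allI impI)
        fix n m assume nm: "n + m = N"
        have r: "rest p q I n m = rest p q J n m"
          by (rule rest_cong) (use less nm in auto)
        have "coeff (p n) n * I n m * coeff (q m) m = coeff (p n) n * J n m * coeff (q m) m"
          using hI hJ r by (metis pairing_split degp degq add_right_cancel)
        then show "I n m = J n m" using cancel ap aq by blast
      qed
    qed
    then show ?thesis by blast
  qed
  show ?thesis
    unfolding equiv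
    using ex uniq by blast
qed

end
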